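(* Let $\boldsymbol{A}$ be the adjacency matrix of an undirected graph without self-loops on a finite vertex set $\boldsymbol{V}=\{1,\dots,N\}$. Let $\mathcal{R}_e\subset\boldsymbol{V}$ be a nonempty set of egos and $\mathcal{R}_a\subset\boldsymbol{V}\setminus\mathcal{R}_e$ a nonempty set of alters, $n_a=|\mathcal{R}_a|$, where each alter $j\in\mathcal{R}_a$ has a unique recruiting ego $e(j)\in\mathcal{R}_e$ with $A_{j\,e(j)}=1$. Let $\widetilde{\boldsymbol{A}}$ be the observed adjacency matrix, with $\widetilde A_{ij}=\widetilde A_{ji}=1$ if and only if $i\in\mathcal{R}_a$ and $j=e(i)$ (all other entries $0$). Let $\boldsymbol{Z}\in\{0,1\}^N$ have independent components with $\Pr(Z_i=1)=p_z\,\mathbb{I}\{i\in\mathcal{R}_e\}$ for a known $p_z\in(0,1)$. Define $F_i=\mathbb{I}\{\sum_{j\neq i}Z_jA_{ij}>0\}$ and $\widetilde F_i=\mathbb{I}\{\sum_{j\neq i}Z_j\widetilde A_{ij}>0\}$. Each unit $i\in\mathcal{R}_e\cup\mathcal{R}_a$ has fixed real potential outcomes $Y_i(z,f)$, $z,f\in\{0,1\}$, and observed outcome $Y_i=\sum_{z,f\in\{0,1\}}Y_i(z,f)\mathbb{I}\{Z_i=z,F_i=f\}$. For $i\in\mathcal{R}_a$ let $\pi_i^a=\Pr(F_i=1)$ (over $\boldsymbol{Z}$), and assume $\pi_i^a<1$ for all $i\in\mathcal{R}_a$. Define $$IE=\frac1{n_a}\sum_{i\in\mathcal{R}_a}[Y_i(0,1)-Y_i(0,0)],\qquad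 \widehat{IE}_{adj}=\frac1{n_a}\sum_{i\in\mathcal{R}_a}\frac{1-p_z}{1-\pi_i^a}\Big[\frac{\mathbb{I}\{\widetilde F_i=1\}Y_i}{p_z}-\frac{\mathbb{I}\{\widetilde F_i=0\}Y_i}{1-p_z}\Big].$$ Then $\mathbb{E}_{\boldsymbol{Z}}[\widehat{IE}_{adj}]=IE$.
   Context: Design-based setting: the network, the sample, the recruitment map and the potential outcomes are fixed; the only randomness is the treatment assignment $\boldsymbol{Z}$, and expectations are over $\boldsymbol{Z}$. *)

theory Defs
  imports "HOL-Probability.Probability"
begin

definition Zpmf :: "nat \<Rightarrow> nat set \<Rightarrow> real \<Rightarrow> (nat \<Rightarrow> bool) pmf" where
  "Zpmf N Eg p = Pi_pmf {1..N} False (\<lambda>i. bernoulli_pmf (if i \<in> Eg then p else 0))"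

definition expo :: "nat \<Rightarrow> (nat \<Rightarrow> nat \<Rightarrow> real) \<Rightarrow> (nat \<Rightarrow> bool) \<Rightarrow> nat \<Rightarrow> bool" where
  "expo N A Z i = ((\<Sum>j\<in>{1..N} - {i}. of_bool (Z j) * A i j) > 0)"

definition Aobs :: "nat set \<Rightarrow> (nat \<Rightarrow> nat) \<Rightarrow> nat \<Rightarrow> nat \<Rightarrow> real" where
  "Aobs Al e i j = (if (i \<in> Al \<and> j = e i) \<or> (j \<in> Al \<and> i = e j) then 1 else 0)"

definition Yobs :: "nat \<Rightarrow> (nat \<Rightarrow> nat \<Rightarrow> real) \<Rightarrow> (nat \<Rightarrow> bool \<Rightarrow> bool \<Rightarrow> real)
    \<Rightarrow> (nat \<Rightarrow> bool) \<Rightarrow> nat \<Rightarrow> real" where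
  "Yobs N A Y Z i = (\<Sum>z\<in>{False, True}. \<Sum>f\<in>{False, True}.
      Y i z f * of_bool (Z i = z \<and> expo N A Z i = f))"

definition pi_a :: "nat \<Rightarrow> (nat \<Rightarrow> nat \<Rightarrow> real) \<Rightarrow> nat set \<Rightarrow> real \<Rightarrow> nat \<Rightarrow> real" where
  "pi_a N A Eg p i = measure_pmf.prob (Zpmf N Eg p) {Z. expo N A Z i}"

definition IE :: "nat set \<Rightarrow> (nat \<Rightarrow> bool \<Rightarrow> bool \<Rightarrow> real) \<Rightarrow> real" where
  "IE Al Y = (1 / real (card Al)) * (\<Sum>i\<in>Al. Y i False True - Y i False False)"

definition IE_adj :: "nat \<Rightarrow> (nat \<Rightarrow> nat \<Rightarrow> real) \<Rightarrow> nat set \<Rightarrow> nat set \<Rightarrow> (nat \<Rightarrow> nat)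
    \<Rightarrow> real \<Rightarrow> (nat \<Rightarrow> bool \<Rightarrow> bool \<Rightarrow> real) \<Rightarrow> (nat \<Rightarrow> bool) \<Rightarrow> real" where
  "IE_adj N A Eg Al e p Y Z = (1 / real (card Al)) * (\<Sum>i\<in>Al.
      (1 - p) / (1 - pi_a N A Eg p i) *
      (of_bool (expo N (Aobs Al e) Z i) * Yobs N A Y Z i / p
       - of_bool (\<not> expo N (Aobs Al e) Z i) * Yobs N A Y Z i / (1 - p)))"

end

theory Submission
  imports Defs
begin

lemma ofb_ind: "(\<lambda>x. (of_bool (P x) :: real)) = indicator {x. P x}"
  by (auto simp: indicator_def fun_eq_iff)

lemma alg1':
  fixes p q r pi a b :: real
  assumes "p + q = 1" "pi + r = 1" "q \<noteq> 0" "r \<noteq> 0" "p \<noteq> 0"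
  shows "q/r * (p * (a/p + a/q) - pi * ((a-b)/q) - b/q) = a - b"
proof -
  have "p * (a/p + a/q) - pi * ((a-b)/q) - b/q = (q*a + p*a - pi*(a-b) - b)/q"
    using assms by (simp add: field_simps)
  also have "q*a + p*a - pi*(a-b) - b = r * (a - b)"
  proof -
    have h: "q*a + p*a = a" using assms(1) by (metis distrib_right mult_1 add.commute)
    have "q*a + p*a - pi*(a-b) - b = a - pi*(a-b) - b" using h by simp
    also have "\<dots> = (1 - pi) * (a - b)" by (simp add: algebra_simps)
    also have "1 - pi = r" using assms(2) by simp
    finally show ?thesis .
  qed
  finally show ?thesis using assms by simp
qed
lemma alg2':
  fixes p q c :: real and x y :: bool and f :: "bool \<Rightarrow> real"
  assumes "p + q = 1" "q \<noteq> 0" "p \<noteq> 0" "x \<Longrightarrow> y"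
  shows "c * (of_bool x * f y / p - of_bool (\<not> x) * f y / q)
   = c * (of_bool x * (f True / p + f True / q) - of_bool y * ((f True - f False) / q) - f False / q)"
  using assms by (cases x; cases y) (simp_all add: diff_divide_distrib)

theorem proposition2:
  fixes N :: nat and A :: "nat \<Rightarrow> nat \<Rightarrow> real" and Eg Al :: "nat set"
    and e :: "nat \<Rightarrow> nat" and p :: real and Y :: "nat \<Rightarrow> bool \<Rightarrow> bool \<Rightarrow> real"
  assumes A01: "\<forall>i\<in>{1..N}. \<forall>j\<in>{1..N}. A i j \<in> {0, 1}"
    and Asym: "\<forall>i\<in>{1..N}. \<forall>j\<in>{1..N}. A i j = A j i"
    and Anoloop: "\<forall>i\<in>{1..N}. A i i = 0"
    and Eg: "Eg \<subseteq> {1..N}" "Eg \<noteq> {}"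
    and Al: "Al \<subseteq> {1..N} - Eg" "Al \<noteq> {}"
    and rec: "\<forall>j\<in>Al. e j \<in> Eg \<and> A j (e j) = 1"
    and p: "0 < p" "p < 1"
    and pi_lt1: "\<forall>i\<in>Al. pi_a N A Eg p i < 1"
  shows "measure_pmf.expectation (Zpmf N Eg p) (IE_adj N A Eg Al e p Y) = IE Al Y"
proof -
  define M where "M = Zpmf N Eg p"
  have setM: "set_pmf M = PiE_dflt {1..N} False (set_pmf \<circ> (\<lambda>i. bernoulli_pmf (if i \<in> Eg then p else 0)))"
    unfolding M_def Zpmf_def by (rule set_Pi_pmf) simp
  have fin: "finite (set_pmf M)"
    unfolding setM by (rule finite_PiE_dflt) auto
  have intg: "\<And>f. integrable M (f :: _ \<Rightarrow> real)"
    using fin by (rule integrable_measure_pmf_finite)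
  have zero: "\<not> Z j" if "Z \<in> set_pmf M" "j \<notin> Eg" for Z j
  proof (cases "j \<in> {1..N}")
    case True
    then have "Z j \<in> set_pmf (bernoulli_pmf 0)" using that unfolding setM PiE_dflt_def by auto
    then show ?thesis by (auto simp: set_pmf_iff)
  next
    case False
    then show ?thesis using that unfolding setM PiE_dflt_def by auto
  qed
  have probk: "measure_pmf.prob M {Z. Z k} = p" if "k \<in> Eg" for k
  proof -
    have "measure_pmf.prob M {Z. Z k} = measure_pmf.prob (map_pmf (\<lambda>f. f k) M) {True}"
      by (simp add: measure_map_pmf vimage_def)
    also have "map_pmf (\<lambda>f. f k) M = bernoulli_pmf p"
      unfolding M_def Zpmf_def using that Eg by (subst Pi_pmf_component) auto
    finally show ?thesis using p by (simp add: measure_pmf_single)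
  qed
  have Efk: "measure_pmf.expectation M (\<lambda>Z. of_bool (Z k)) = p" if "k \<in> Eg" for k
    using probk[OF that] unfolding ofb_ind[of "\<lambda>Z. Z k"] by simp
  have Eexpo: "measure_pmf.expectation M (\<lambda>Z. of_bool (expo N A Z i)) = pi_a N A Eg p i" for i
    unfolding ofb_ind[of "\<lambda>Z. expo N A Z i"] by (simp add: pi_a_def M_def)
  have per: "measure_pmf.expectation M (\<lambda>Z. (1 - p) / (1 - pi_a N A Eg p i) *
      (of_bool (expo N (Aobs Al e) Z i) * Yobs N A Y Z i / p
       - of_bool (\<not> expo N (Aobs Al e) Z i) * Yobs N A Y Z i / (1 - p)))
      = Y i False True - Y i False False" if i: "i \<in> Al" for i
  proof -
    define c where "c = (1 - p) / (1 - pi_a N A Eg p i)"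
    define k where "k = e i"
    have k: "k \<in> Eg" "k \<in> {1..N}" "k \<noteq> i" using rec i Al Eg unfolding k_def by (auto, fastforce)
    have iN: "i \<in> {1..N}" "i \<notin> Eg" using i Al by auto
    have Aik: "A i k = 1" using rec i unfolding k_def by auto
    have obs: "expo N (Aobs Al e) Z i = Z k" for Z
    proof -
      have "(\<Sum>j\<in>{1..N} - {i}. of_bool (Z j) * Aobs Al e i j)
          = (\<Sum>j\<in>{1..N} - {i}. if j = k then of_bool (Z k) else 0)"
      proof (rule sum.cong)
        fix j assume "j \<in> {1..N} - {i}"
        have "\<not> (j \<in> Al \<and> i = e j)" using rec iN by auto
        then show "of_bool (Z j) * Aobs Al e i j = (if j = k then of_bool (Z k) else 0)"
          using i unfolding Aobs_def k_def by auto
      qed simp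
      also have "\<dots> = of_bool (Z k)" using k by simp
      finally show ?thesis unfolding expo_def by simp
    qed
    have ex: "expo N A Z i" if "Z k" for Z
    proof -
      have nn: "\<forall>j\<in>{1..N} - {i}. 0 \<le> of_bool (Z j) * A i j" using A01 iN by fastforce
      have "(\<Sum>j\<in>{1..N} - {i}. of_bool (Z j) * A i j) \<ge> of_bool (Z k) * A i k"
        by (rule member_le_sum) (use nn k in auto)
      then show ?thesis unfolding expo_def using that Aik by simp
    qed
    have ae: "AE Z in M. (1 - p) / (1 - pi_a N A Eg p i) *
      (of_bool (expo N (Aobs Al e) Z i) * Yobs N A Y Z i / p
       - of_bool (\<not> expo N (Aobs Al e) Z i) * Yobs N A Y Z i / (1 - p))
      = c * (of_bool (Z k) * (Y i False True / p + Y i False True / (1 - p))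
           - of_bool (expo N A Z i) * ((Y i False True - Y i False False) / (1 - p))
           - Y i False False / (1 - p))"
    proof (rule AE_pmfI)
      fix Z assume Z: "Z \<in> set_pmf M"
      have nZi: "\<not> Z i" using zero[OF Z iN(2)] .
      have Yo: "Yobs N A Y Z i = Y i False (expo N A Z i)"
        unfolding Yobs_def using nZi by (cases "expo N A Z i") auto
      show "(1 - p) / (1 - pi_a N A Eg p i) *
        (of_bool (expo N (Aobs Al e) Z i) * Yobs N A Y Z i / p
         - of_bool (\<not> expo N (Aobs Al e) Z i) * Yobs N A Y Z i / (1 - p))
        = c * (of_bool (Z k) * (Y i False True / p + Y i False True / (1 - p))
           - of_bool (expo N A Z i) * ((Y i False True - Y i False False) / (1 - p))
           - Y i False False / (1 - p))"
        unfolding obs Yo c_def[symmetric] using ex[of Z] p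
        by (intro alg2'[where f="Y i False"]) auto
    qed
    have pl: "pi_a N A Eg p i < 1" using pi_lt1 i by auto
    have "measure_pmf.expectation M (\<lambda>Z. (1 - p) / (1 - pi_a N A Eg p i) *
      (of_bool (expo N (Aobs Al e) Z i) * Yobs N A Y Z i / p
       - of_bool (\<not> expo N (Aobs Al e) Z i) * Yobs N A Y Z i / (1 - p)))
      = measure_pmf.expectation M (\<lambda>Z. c * (of_bool (Z k) * (Y i False True / p + Y i False True / (1 - p))
           - of_bool (expo N A Z i) * ((Y i False True - Y i False False) / (1 - p))
           - Y i False False / (1 - p)))"
      by (rule integral_cong_AE) (use ae in auto)
    also have "\<dots> = c * (p * (Y i False True / p + Y i False True / (1 - p))
           - pi_a N A Eg p i * ((Y i False True - Y i False False) / (1 - p))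
           - Y i False False / (1 - p))"
      by (simp add: intg Efk[OF k(1)] Eexpo)
    also have "\<dots> = Y i False True - Y i False False"
      unfolding c_def using p pl by (intro alg1') auto
    finally show ?thesis .
  qed
  have "measure_pmf.expectation M (IE_adj N A Eg Al e p Y)
     = (1 / real (card Al)) * (\<Sum>i\<in>Al. measure_pmf.expectation M (\<lambda>Z. (1 - p) / (1 - pi_a N A Eg p i) *
      (of_bool (expo N (Aobs Al e) Z i) * Yobs N A Y Z i / p
       - of_bool (\<not> expo N (Aobs Al e) Z i) * Yobs N A Y Z i / (1 - p))))"
    unfolding IE_adj_def by (simp add: intg Bochner_Integration.integral_sum)
  also have "\<dots> = IE Al Y"
    unfolding IE_def by (subst sum.cong[OF refl per]) auto
  finally show ?thesis unfolding M_def .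
qed

end
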